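(* Assume there are constants $\gamma_t\ge 0$ ($t=0,\dots,T-1$) with $|C_t(x)-C_t(y)|\le\gamma_t|x-y|$ for all $x,y$. If $0\le x-x'\le\theta$, $z_{k-1}<x\le z_k$ with $z_k\in Z_\theta$, and $t\in\{0,1,\dots,T-1\}$, then $V_t(x')-V_t(x)\le 2\bar\varphi_t(\theta,z_k)$.
   Context: Model. Fix an integer horizon $T\ge 2$, a discount factor $\alpha\in(0,1]$, and for $t=0,\dots,T-1$: unit ordering costs $c_t\in\mathbb R$, a salvage coefficient $c_T\in\mathbb R$, setup costs $K_t\ge 0$, functions $G_t:\mathbb R\to\mathbb R$, and independent nonnegative random demands $D_0,\dots,D_{T-1}$ with right-continuous distribution functions $F_t$ and finite means; all expectations appearing are assumed finite. Put $C_t(y)=(c_t-\alpha c_{t+1})y+G_t(y)+\alpha c_{t+1}E[D_t]$. Standing assumptions: (i) each $C_t$ is convex with $C_t(y)\to+\infty$ as $|y|\to\infty$; (ii) $K_t\ge \alpha K_{t+1}$ for $t=0,\dots,T-2$. Grid construction. Fix $\theta>0$, $z_m=m\theta$, $Z_\theta=\{z_m:m\in\mathbb Z\}$, $f_t(n)=F_t(z_{n+1})-F_t(z_n)$ ($n\ge -1$). $C^m_t=\min\{y: C_t(y)=\min_x C_t(x)\}$; with $z_{n_0}<C^m_t\le z_{n_0+1}$, $S^U_t=\min\{z_m\in Z_\theta: z_m\ge C^m_t,\ C_t(z_m)>C_t(z_{n_0})+K_t\}$. $s_{T-1}$ is a point with $s_{T-1}\le C^m_{T-1}$, $C_{T-1}(s_{T-1})=C_{T-1}(C^m_{T-1})+K_{T-1}$;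 $\bar I_{T-1}=s_{T-1}$. For $t=T-2,\dots,0$: $I_t=\max\{z_m\in Z_\theta: z_m<\min(\bar I_{t+1}-\theta,C^m_t)\}$, $\bar I_t=\max\{z_m\in Z_\theta: z_m\le I_t,\ C_t(z_m)>C_t(I_t)+K_t\}+\theta$. $H_{T-1}=C_{T-1}$, $S_{T-1}=C^m_{T-1}$; $V_t(y)=H_t(S_t)+K_t$ for $y<s_t$, $V_t(y)=H_t(y)$ for $y\ge s_t$. For $t=T-2,\dots,0$: $H_t(y)=C_t(y)+\alpha\sum_{n=-1}^\infty V_{t+1}(y-z_n)f_t(n)$; $S_t=\max\{z_m\in Z_\theta: I_t\le z_m\le S^U_t,\ H_t(z_m)=\min\{H_t(z_n):z_n\in Z_\theta, I_t\le z_n\le S^U_t\}\}$; $s_t=S_t$ if $K_t=0$, else $s_t=\min\{z_m\in Z_\theta:\bar I_t\le z_m\le S_t,\ H_t(z_m)\le H_t(S_t)+K_t\}$. Upper estimate functions. $\bar\psi_{T-1}(x,y)=\gamma_{T-1}x$; $\bar\varphi_{T-1}(x,y)=0$ if $y<s_{T-1}$ and $=\gamma_{T-1}x$ if $y\ge s_{T-1}$. For $t=0,\dots,T-2$, with $n$ the integer such that $z_{n-1}\le y-s_{t+1}<z_n$: $\bar\psi_t(x,y)=\gamma_tx$ if $y<s_{t+1}-\theta$, else $\bar\psi_t(x,y)=\gamma_tx+\alpha\sum_{m=-1}^{n-1}\bar\varphi_{t+1}(x,y-z_m)f_t(m)$; $\bar\varphi_t(x,y)=0$ if $y<s_t$,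 $=\bar\psi_t(y-s_t+\theta,y)$ if $y\ge s_t$ and $y-x<s_t$, $=\bar\psi_t(x,y)$ if $y\ge s_t$ and $y-x\ge s_t$. *)

theory Defs
  imports "HOL-Probability.Probability"
begin

definition zg :: "real \<Rightarrow> int \<Rightarrow> real" where
  "zg \<theta> m = real_of_int m * \<theta>"

definition Zg :: "real \<Rightarrow> real set" where
  "Zg \<theta> = range (zg \<theta>)"

definition cdf :: "real measure \<Rightarrow> real \<Rightarrow> real" where
  "cdf N x = measure N {..x}"

definition fg :: "real \<Rightarrow> real measure \<Rightarrow> int \<Rightarrow> real" where
  "fg \<theta> N n = cdf N (zg \<theta> (n + 1)) - cdf N (zg \<theta> n)"

definition Cfun :: "real \<Rightarrow> (nat \<Rightarrow> real) \<Rightarrow> (nat \<Rightarrow> real \<Rightarrow> real) \<Rightarrow> (nat \<Rightarrow> real measure)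
    \<Rightarrow> nat \<Rightarrow> real \<Rightarrow> real" where
  "Cfun \<alpha> c G M t y = (c t - \<alpha> * c (Suc t)) * y + G t y + \<alpha> * c (Suc t) * (\<integral>x. x \<partial>M t)"

definition Cmin :: "(real \<Rightarrow> real) \<Rightarrow> real" where
  "Cmin Ct = (LEAST y. \<forall>x. Ct y \<le> Ct x)"

definition zlow :: "real \<Rightarrow> (real \<Rightarrow> real) \<Rightarrow> real" where
  "zlow \<theta> Ct = (GREATEST x. x \<in> Zg \<theta> \<and> x < Cmin Ct)"

definition SUp :: "real \<Rightarrow> (real \<Rightarrow> real) \<Rightarrow> real \<Rightarrow> real" where
  "SUp \<theta> Ct Kt = (LEAST x. x \<in> Zg \<theta> \<and> Cmin Ct \<le> x \<and> Ct x > Ct (zlow \<theta> Ct) + Kt)"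

definition sLast :: "(real \<Rightarrow> real) \<Rightarrow> real \<Rightarrow> real" where
  "sLast Ct Kt = (SOME s. s \<le> Cmin Ct \<and> Ct s = Ct (Cmin Ct) + Kt)"

definition Istep :: "real \<Rightarrow> (real \<Rightarrow> real) \<Rightarrow> real \<Rightarrow> real" where
  "Istep \<theta> Ct barInext = (GREATEST x. x \<in> Zg \<theta> \<and> x < min (barInext - \<theta>) (Cmin Ct))"

definition barIstep :: "real \<Rightarrow> (real \<Rightarrow> real) \<Rightarrow> real \<Rightarrow> real \<Rightarrow> real" where
  "barIstep \<theta> Ct Kt barInext =
     (GREATEST x. x \<in> Zg \<theta> \<and> x \<le> Istep \<theta> Ct barInext
        \<and> Ct x > Ct (Istep \<theta> Ct barInext) + Kt) + \<theta>"

text \<open>Backward recursion indexed by j = T-1-t.\<close>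
primrec barIaux :: "real \<Rightarrow> (nat \<Rightarrow> real \<Rightarrow> real) \<Rightarrow> (nat \<Rightarrow> real) \<Rightarrow> nat \<Rightarrow> nat \<Rightarrow> real" where
  "barIaux \<theta> C K T 0 = sLast (C (T - 1)) (K (T - 1))"
| "barIaux \<theta> C K T (Suc j) = barIstep \<theta> (C (T - 2 - j)) (K (T - 2 - j)) (barIaux \<theta> C K T j)"

definition barI :: "real \<Rightarrow> (nat \<Rightarrow> real \<Rightarrow> real) \<Rightarrow> (nat \<Rightarrow> real) \<Rightarrow> nat \<Rightarrow> nat \<Rightarrow> real" where
  "barI \<theta> C K T t = barIaux \<theta> C K T (T - 1 - t)"

definition Igrid :: "real \<Rightarrow> (nat \<Rightarrow> real \<Rightarrow> real) \<Rightarrow> (nat \<Rightarrow> real) \<Rightarrow> nat \<Rightarrow> nat \<Rightarrow> real" where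
  "Igrid \<theta> C K T t = Istep \<theta> (C t) (barI \<theta> C K T (Suc t))"

text \<open>V from (H, S, s) and K: V(y) = H(S)+K for y < s, H(y) otherwise.\<close>
definition Vof :: "(real \<Rightarrow> real) \<times> real \<times> real \<Rightarrow> real \<Rightarrow> real \<Rightarrow> real" where
  "Vof HSs Kt y = (if y < snd (snd HSs) then fst HSs (fst (snd HSs)) + Kt else fst HSs y)"

text \<open>The triple (H_t, S_t, s_t), computed backward, indexed by j = T-1-t.
  fd t n stands for f_t(n); the sum over n \<ge> -1 is written with n = k - 1, k \<in> nat.\<close>
primrec HSsaux :: "real \<Rightarrow> real \<Rightarrow> (nat \<Rightarrow> real \<Rightarrow> real) \<Rightarrow> (nat \<Rightarrow> real) \<Rightarrow> (nat \<Rightarrow> int \<Rightarrow> real)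
    \<Rightarrow> nat \<Rightarrow> nat \<Rightarrow> (real \<Rightarrow> real) \<times> real \<times> real" where
  "HSsaux \<theta> \<alpha> C K fd T 0 = (C (T - 1), Cmin (C (T - 1)), sLast (C (T - 1)) (K (T - 1)))"
| "HSsaux \<theta> \<alpha> C K fd T (Suc j) =
     (let t = T - 2 - j;
          H = (\<lambda>y. C t y + \<alpha> * (\<Sum>k. Vof (HSsaux \<theta> \<alpha> C K fd T j) (K (Suc t)) (y - zg \<theta> (int k - 1))
                                      * fd t (int k - 1)));
          G = {x. x \<in> Zg \<theta> \<and> Igrid \<theta> C K T t \<le> x \<and> x \<le> SUp \<theta> (C t) (K t)};
          S = (GREATEST x. x \<in> G \<and> H x = Min (H ` G));
          s = (if K t = 0 then S
               else (LEAST x. x \<in> Zg \<theta> \<and> barI \<theta> C K T t \<le> x \<and> x \<le> S \<and> H x \<le> H S + K t))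
      in (H, S, s))"

definition Hf where "Hf \<theta> \<alpha> C K fd T t = fst (HSsaux \<theta> \<alpha> C K fd T (T - 1 - t))"
definition Sf where "Sf \<theta> \<alpha> C K fd T t = fst (snd (HSsaux \<theta> \<alpha> C K fd T (T - 1 - t)))"
definition sf where "sf \<theta> \<alpha> C K fd T t = snd (snd (HSsaux \<theta> \<alpha> C K fd T (T - 1 - t)))"

definition Vf :: "real \<Rightarrow> real \<Rightarrow> (nat \<Rightarrow> real \<Rightarrow> real) \<Rightarrow> (nat \<Rightarrow> real) \<Rightarrow> (nat \<Rightarrow> int \<Rightarrow> real)
    \<Rightarrow> nat \<Rightarrow> nat \<Rightarrow> real \<Rightarrow> real" where
  "Vf \<theta> \<alpha> C K fd T t y = Vof (HSsaux \<theta> \<alpha> C K fd T (T - 1 - t)) (K t) y"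

text \<open>psi-bar_t from phi-bar_{t+1} (phinext), s_{t+1} (snext), gamma_t, f_t.
  The integer n with z_{n-1} \<le> y - s_{t+1} < z_n is floor((y - s_{t+1})/theta) + 1.\<close>
definition psistep :: "real \<Rightarrow> real \<Rightarrow> real \<Rightarrow> (int \<Rightarrow> real) \<Rightarrow> real \<Rightarrow> (real \<Rightarrow> real \<Rightarrow> real)
    \<Rightarrow> real \<Rightarrow> real \<Rightarrow> real" where
  "psistep \<theta> \<alpha> \<gamma>t ft snext phinext x y =
     (if y < snext - \<theta> then \<gamma>t * x
      else (let n = \<lfloor>(y - snext) / \<theta>\<rfloor> + 1
            in \<gamma>t * x + \<alpha> * (\<Sum>m\<in>{-1..n - 1}. phinext x (y - zg \<theta> m) * ft m)))"

definition phistep :: "real \<Rightarrow> real \<Rightarrow> (real \<Rightarrow> real \<Rightarrow> real) \<Rightarrow> real \<Rightarrow> real \<Rightarrow> real" where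
  "phistep \<theta> st psi x y =
     (if y < st then 0
      else if y - x < st then psi (y - st + \<theta>) y
      else psi x y)"

text \<open>phi-bar_t, indexed by j = T-1-t; sv t = s_t.\<close>
primrec phiaux :: "real \<Rightarrow> real \<Rightarrow> (nat \<Rightarrow> real) \<Rightarrow> (nat \<Rightarrow> int \<Rightarrow> real) \<Rightarrow> (nat \<Rightarrow> real)
    \<Rightarrow> nat \<Rightarrow> nat \<Rightarrow> real \<Rightarrow> real \<Rightarrow> real" where
  "phiaux \<theta> \<alpha> \<gamma> fd sv T 0 = (\<lambda>x y. if y < sv (T - 1) then 0 else \<gamma> (T - 1) * x)"
| "phiaux \<theta> \<alpha> \<gamma> fd sv T (Suc j) =
     (let t = T - 2 - j
      in phistep \<theta> (sv t)
           (psistep \<theta> \<alpha> (\<gamma> t) (fd t) (sv (Suc t)) (phiaux \<theta> \<alpha> \<gamma> fd sv T j)))"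

definition phibar where "phibar \<theta> \<alpha> \<gamma> fd sv T t = phiaux \<theta> \<alpha> \<gamma> fd sv T (T - 1 - t)"

end

theory Submission
  imports Defs
begin


lemma zg_diff: "zg \<theta> a - zg \<theta> b = zg \<theta> (a - b)"
  by (simp add: zg_def algebra_simps)
lemma zg_add: "zg \<theta> a + zg \<theta> b = zg \<theta> (a + b)"
  by (simp add: zg_def algebra_simps)
lemma zg_le_iff: "\<theta> > 0 \<Longrightarrow> zg \<theta> a \<le> zg \<theta> b \<longleftrightarrow> a \<le> b"
  by (simp add: zg_def)
lemma zg_less_iff: "\<theta> > 0 \<Longrightarrow> zg \<theta> a < zg \<theta> b \<longleftrightarrow> a < b"
  by (simp add: zg_def)
lemma in_Zg: "zg \<theta> m \<in> Zg \<theta>" by (simp add: Zg_def)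
lemma Zg_E: "x \<in> Zg \<theta> \<Longrightarrow> (\<And>m. x = zg \<theta> m \<Longrightarrow> P) \<Longrightarrow> P"
  by (auto simp: Zg_def)

lemma grid_greatest:
  assumes th: "\<theta> > 0" and ex: "Q x0" and bd: "\<And>x. Q x \<Longrightarrow> x \<in> Zg \<theta> \<and> x \<le> b"
  shows "Q (Greatest Q) \<and> (\<forall>y. Q y \<longrightarrow> y \<le> Greatest Q)"
proof -
  define M where "M = {m. Q (zg \<theta> m)}"
  obtain m0 where m0: "x0 = zg \<theta> m0" using bd[OF ex] by (auto simp: Zg_def)
  have m0M: "m0 \<in> M" using ex m0 M_def by simp
  have bdM: "m \<le> \<lfloor>b / \<theta>\<rfloor>" if "m \<in> M" for m
  proof -
    have "zg \<theta> m \<le> b" using bd that M_def by auto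
    hence "real_of_int m \<le> b / \<theta>" using th by (simp add: zg_def pos_le_divide_eq)
    thus ?thesis by linarith
  qed
  define S where "S = {m \<in> M. m0 \<le> m}"
  have fin: "finite S" by (rule finite_subset[of _ "{m0..\<lfloor>b / \<theta>\<rfloor>}"]) (auto simp: S_def bdM)
  have ne: "S \<noteq> {}" using m0M S_def by auto
  define mx where "mx = Max S"
  have mxS: "mx \<in> S" using Max_in[OF fin ne] mx_def by simp
  have upper: "m \<le> mx" if "m \<in> M" for m
  proof (cases "m0 \<le> m")
    case True thus ?thesis using that fin S_def mx_def by (auto intro: Max_ge)
  next
    case False thus ?thesis using mxS S_def by auto
  qed
  have Qmx: "Q (zg \<theta> mx)" using mxS S_def M_def by auto
  have all: "\<forall>y. Q y \<longrightarrow> y \<le> zg \<theta> mx"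
  proof (intro allI impI)
    fix y assume "Q y"
    then obtain m where m: "y = zg \<theta> m" using bd by (auto simp: Zg_def)
    hence "m \<in> M" using \<open>Q y\<close> M_def by simp
    thus "y \<le> zg \<theta> mx" using upper m th by (simp add: zg_le_iff)
  qed
  have "Greatest Q = zg \<theta> mx" by (rule Greatest_equality) (use Qmx all in auto)
  thus ?thesis using Qmx all by simp
qed

lemma grid_least:
  assumes th: "\<theta> > 0" and ex: "Q x0" and bd: "\<And>x. Q x \<Longrightarrow> x \<in> Zg \<theta> \<and> b \<le> x"
  shows "Q (Least Q) \<and> (\<forall>y. Q y \<longrightarrow> Least Q \<le> y)"
proof -
  define M where "M = {m. Q (zg \<theta> m)}"
  obtain m0 where m0: "x0 = zg \<theta> m0" using bd[OF ex] by (auto simp: Zg_def)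
  have m0M: "m0 \<in> M" using ex m0 M_def by simp
  have bdM: "\<lceil>b / \<theta>\<rceil> \<le> m" if "m \<in> M" for m
  proof -
    have "b \<le> zg \<theta> m" using bd that M_def by auto
    hence "b / \<theta> \<le> real_of_int m" using th by (simp add: zg_def pos_divide_le_eq)
    thus ?thesis by linarith
  qed
  define S where "S = {m \<in> M. m \<le> m0}"
  have fin: "finite S" by (rule finite_subset[of _ "{\<lceil>b / \<theta>\<rceil>..m0}"]) (auto simp: S_def bdM)
  have ne: "S \<noteq> {}" using m0M S_def by auto
  define mx where "mx = Min S"
  have mxS: "mx \<in> S" using Min_in[OF fin ne] mx_def by simp
  have lower: "mx \<le> m" if "m \<in> M" for m
  proof (cases "m \<le> m0")
    case True thus ?thesis using that fin S_def mx_def by (auto intro: Min_le)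
  next
    case False thus ?thesis using mxS S_def by auto
  qed
  have Qmx: "Q (zg \<theta> mx)" using mxS S_def M_def by auto
  have all: "\<forall>y. Q y \<longrightarrow> zg \<theta> mx \<le> y"
  proof (intro allI impI)
    fix y assume "Q y"
    then obtain m where m: "y = zg \<theta> m" using bd by (auto simp: Zg_def)
    hence "m \<in> M" using \<open>Q y\<close> M_def by simp
    thus "zg \<theta> mx \<le> y" using lower m th by (simp add: zg_le_iff)
  qed
  have "Least Q = zg \<theta> mx" by (rule Least_equality) (use Qmx all in auto)
  thus ?thesis using Qmx all by simp
qed

lemma grid_below: "\<theta> > 0 \<Longrightarrow> \<exists>m. zg \<theta> m \<le> v"
  by (rule exI[of _ "\<lfloor>v/\<theta>\<rfloor>"]) (simp add: zg_def, metis floor_divide_lower)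
lemma grid_above: "\<theta> > 0 \<Longrightarrow> \<exists>m. v \<le> zg \<theta> m"
  by (rule exI[of _ "\<lceil>v/\<theta>\<rceil>"]) (simp add: zg_def, metis ceiling_divide_upper)

lemma grid_sep: assumes "\<theta> > 0" "x \<in> Zg \<theta>" "y \<in> Zg \<theta>" "x < y" shows "x + \<theta> \<le> y"
proof -
  obtain a b where "x = zg \<theta> a" "y = zg \<theta> b" using assms by (auto simp: Zg_def)
  moreover have "a < b" using assms calculation by (simp add: zg_less_iff)
  hence "a + 1 \<le> b" by simp
  ultimately show ?thesis using assms(1) zg_le_iff[of \<theta> "a+1" b] by (simp add: zg_def algebra_simps)
qed



lemma Istep_props:
  assumes th: "\<theta> > 0"
  shows "Istep \<theta> Ct v \<in> Zg \<theta> \<and> Istep \<theta> Ct v < min (v - \<theta>) (Cmin Ct)"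
proof -
  let ?m = "min (v - \<theta>) (Cmin Ct)"
  obtain m where m: "zg \<theta> m \<le> ?m - 1" using grid_below[OF th] by blast
  have "(\<lambda>x. x \<in> Zg \<theta> \<and> x < ?m) (Greatest (\<lambda>x. x \<in> Zg \<theta> \<and> x < ?m))"
    using grid_greatest[OF th, of "\<lambda>x. x \<in> Zg \<theta> \<and> x < ?m" "zg \<theta> m" ?m] m in_Zg by force
  thus ?thesis unfolding Istep_def by simp
qed

lemma barIstep_props:
  fixes v :: real
  assumes th: "\<theta> > 0" and K: "Kt \<ge> 0" and bot: "filterlim Ct at_top at_bot"
  defines "I \<equiv> Istep \<theta> Ct v"
  shows "barIstep \<theta> Ct Kt v \<in> Zg \<theta> \<and> barIstep \<theta> Ct Kt v \<le> I
         \<and> Ct (barIstep \<theta> Ct Kt v - \<theta>) > Ct I + Kt"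
proof -
  let ?Q = "\<lambda>x. x \<in> Zg \<theta> \<and> x \<le> I \<and> Ct x > Ct I + Kt"
  have "eventually (\<lambda>y. Ct y > Ct I + Kt) at_bot"
    using bot by (simp add: filterlim_at_top_dense)
  then obtain b where b: "\<And>y. y \<le> b \<Longrightarrow> Ct y > Ct I + Kt" by (auto simp: eventually_at_bot_linorder)
  obtain m where m: "zg \<theta> m \<le> min b I" using grid_below[OF th] by blast
  have Qm: "?Q (zg \<theta> m)" using m b in_Zg by force
  have g: "?Q (Greatest ?Q)" using grid_greatest[OF th, of ?Q, OF Qm] by blast
  have IZ: "I \<in> Zg \<theta>" using Istep_props[OF th] I_def by blast
  have "Greatest ?Q \<noteq> I" using g K by auto
  hence "Greatest ?Q < I" using g by auto
  hence le: "Greatest ?Q + \<theta> \<le> I" using grid_sep[OF th] g IZ by blast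
  have eq: "barIstep \<theta> Ct Kt v = Greatest ?Q + \<theta>" unfolding barIstep_def I_def by simp
  obtain a where a: "Greatest ?Q = zg \<theta> a" using g by (auto simp: Zg_def)
  have "Greatest ?Q + \<theta> = zg \<theta> (a + 1)" using a by (simp add: zg_def algebra_simps)
  hence "Greatest ?Q + \<theta> \<in> Zg \<theta>" using in_Zg by metis
  thus ?thesis using eq le g by simp
qed

lemma SUp_props:
  assumes th: "\<theta> > 0" and top: "filterlim Ct at_top at_top"
  shows "SUp \<theta> Ct Kt \<in> Zg \<theta> \<and> Cmin Ct \<le> SUp \<theta> Ct Kt"
proof -
  let ?c = "Ct (zlow \<theta> Ct) + Kt"
  let ?Q = "\<lambda>x. x \<in> Zg \<theta> \<and> Cmin Ct \<le> x \<and> Ct x > ?c"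
  have "eventually (\<lambda>y. Ct y > ?c) at_top"
    using top by (simp add: filterlim_at_top_dense)
  then obtain b where b: "\<And>y. y \<ge> b \<Longrightarrow> Ct y > ?c" by (auto simp: eventually_at_top_linorder)
  obtain m where m: "max b (Cmin Ct) \<le> zg \<theta> m" using grid_above[OF th] by blast
  have Qm: "?Q (zg \<theta> m)" using m b in_Zg by force
  have g: "?Q (Least ?Q)" using grid_least[OF th, of ?Q, OF Qm] by blast
  thus ?thesis unfolding SUp_def by simp
qed

lemma lip_cont:
  assumes "\<And>u v. \<bar>f u - f v\<bar> \<le> L * \<bar>u - v\<bar>" "L \<ge> 0"
  shows "continuous_on S (f :: real \<Rightarrow> real)"
proof -
  have "L-lipschitz_on S f" by (rule lipschitz_onI) (use assms in \<open>auto simp: dist_real_def\<close>)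
  thus ?thesis by (rule lipschitz_on_continuous_on)
qed

lemma sLast_props:
  assumes K: "Kt \<ge> 0" and bot: "filterlim Ct at_top at_bot" and cont: "continuous_on UNIV Ct"
  shows "sLast Ct Kt \<le> Cmin Ct \<and> Ct (sLast Ct Kt) = Ct (Cmin Ct) + Kt"
proof -
  let ?cm = "Cmin Ct"
  have "eventually (\<lambda>y. Ct y > Ct ?cm + Kt) at_bot"
    using bot by (simp add: filterlim_at_top_dense)
  then obtain b where b: "\<And>y. y \<le> b \<Longrightarrow> Ct y > Ct ?cm + Kt" by (auto simp: eventually_at_bot_linorder)
  let ?a = "min b ?cm"
  have ba: "Ct ?cm + Kt \<le> Ct ?a" using b[of ?a] by simp
  have "\<exists>x\<ge>?a. x \<le> ?cm \<and> Ct x = Ct ?cm + Kt"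
    by (rule IVT2') (use ba K in \<open>auto intro: continuous_on_subset[OF cont]\<close>)
  hence "\<exists>s. s \<le> ?cm \<and> Ct s = Ct ?cm + Kt" by blast
  thus ?thesis unfolding sLast_def by (rule someI_ex)
qed



locale inv =
  fixes \<theta> \<alpha> :: real and T :: nat and C :: "nat \<Rightarrow> real \<Rightarrow> real" and K \<gamma> :: "nat \<Rightarrow> real"
    and fd :: "nat \<Rightarrow> int \<Rightarrow> real"
  assumes theta: "\<theta> > 0" and alpha: "\<alpha> \<ge> 0" and T2: "T \<ge> 2"
    and Kpos: "\<And>t. t < T \<Longrightarrow> K t \<ge> 0"
    and gam: "\<And>t. t < T \<Longrightarrow> \<gamma> t \<ge> 0"
    and lip: "\<And>t u v. t < T \<Longrightarrow> \<bar>C t u - C t v\<bar> \<le> \<gamma> t * \<bar>u - v\<bar>"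
    and top: "\<And>t. t < T \<Longrightarrow> filterlim (C t) at_top at_top"
    and bot: "\<And>t. t < T \<Longrightarrow> filterlim (C t) at_top at_bot"
    and fdpos: "\<And>t n. t + 2 \<le> T \<Longrightarrow> fd t n \<ge> 0"
    and summ: "\<And>t y. t + 2 \<le> T \<Longrightarrow> summable
                   (\<lambda>n. Vf \<theta> \<alpha> C K fd T (Suc t) (y - zg \<theta> (int n - 1)) * fd t (int n - 1))"
begin

abbreviation "V \<equiv> Vf \<theta> \<alpha> C K fd T"
abbreviation "Hh \<equiv> Hf \<theta> \<alpha> C K fd T"
abbreviation "SS \<equiv> Sf \<theta> \<alpha> C K fd T"
abbreviation "ss \<equiv> sf \<theta> \<alpha> C K fd T"
abbreviation "bI \<equiv> barI \<theta> C K T"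
abbreviation "Ig \<equiv> Igrid \<theta> C K T"
abbreviation "z \<equiv> zg \<theta>"
abbreviation "GG t \<equiv> {x. x \<in> Zg \<theta> \<and> Ig t \<le> x \<and> x \<le> SUp \<theta> (C t) (K t)}"

lemma V_eq: "V t y = (if y < ss t then Hh t (SS t) + K t else Hh t y)"
  by (simp add: Vf_def Vof_def Hf_def Sf_def sf_def)

lemma last_eqs: "Hh (T-1) = C (T-1)" "SS (T-1) = Cmin (C (T-1))"
   "ss (T-1) = sLast (C (T-1)) (K (T-1))" "bI (T-1) = sLast (C (T-1)) (K (T-1))"
  by (simp_all add: Hf_def Sf_def sf_def barI_def)

lemma idx: assumes "t < T - 1" shows "T - 1 - t = Suc (T - 1 - Suc t)" "T - 2 - (T - 1 - Suc t) = t"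
  using assms by auto

lemma bI_step: "t < T - 1 \<Longrightarrow> bI t = barIstep \<theta> (C t) (K t) (bI (Suc t))"
  unfolding barI_def by (simp only: idx barIaux.simps)

lemma Ig_eq: "Ig t = Istep \<theta> (C t) (bI (Suc t))"
  by (simp add: Igrid_def)

lemma HS_unf: assumes "t < T - 1"
  shows "HSsaux \<theta> \<alpha> C K fd T (T - 1 - t) =
     (let H = (\<lambda>y. C t y + \<alpha> * (\<Sum>k. V (Suc t) (y - z (int k - 1)) * fd t (int k - 1)));
          G = GG t;
          S = (GREATEST x. x \<in> G \<and> H x = Min (H ` G));
          s = (if K t = 0 then S
               else (LEAST x. x \<in> Zg \<theta> \<and> bI t \<le> x \<and> x \<le> S \<and> H x \<le> H S + K t))
      in (H, S, s))"
  using assms unfolding Vf_def by (simp only: idx HSsaux.simps Let_def)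

lemma Hh_eq: "t < T - 1 \<Longrightarrow> Hh t = (\<lambda>y. C t y + \<alpha> * (\<Sum>k. V (Suc t) (y - z (int k - 1)) * fd t (int k - 1)))"
  unfolding Hf_def by (simp only: HS_unf Let_def fst_conv)

lemma SS_eq: "t < T - 1 \<Longrightarrow> SS t = (GREATEST x. x \<in> GG t \<and> Hh t x = Min (Hh t ` GG t))"
  unfolding Sf_def by (simp only: HS_unf Hh_eq Let_def fst_conv snd_conv)

lemma ss_eq: "t < T - 1 \<Longrightarrow> ss t = (if K t = 0 then SS t
   else (LEAST x. x \<in> Zg \<theta> \<and> bI t \<le> x \<and> x \<le> SS t \<and> Hh t x \<le> Hh t (SS t) + K t))"
  unfolding sf_def by (simp only: HS_unf Hh_eq SS_eq Let_def fst_conv snd_conv)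

lemma Ig_props: "Ig t \<in> Zg \<theta> \<and> Ig t + \<theta> < bI (Suc t) \<and> Ig t < Cmin (C t)"
  using Istep_props[OF theta, of "C t" "bI (Suc t)"] unfolding Ig_eq by auto

lemma bI_props: assumes "t < T - 1"
  shows "bI t \<in> Zg \<theta> \<and> bI t \<le> Ig t \<and> C t (bI t - \<theta>) > C t (Ig t) + K t"
  using barIstep_props[OF theta Kpos[of t] bot[of t], where v="bI (Suc t)"] assms
  unfolding bI_step[OF assms] Ig_eq by auto

lemma GG_fin: assumes "t < T" shows "finite (GG t)"
proof -
  obtain i where i: "Ig t = z i" using Ig_props[of t] by (auto simp: Zg_def)
  obtain u where u: "SUp \<theta> (C t) (K t) = z u" using SUp_props[OF theta top[OF assms]] by (auto simp: Zg_def)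
  have "GG t \<subseteq> z ` {i..u}"
  proof
    fix x assume "x \<in> GG t"
    then obtain m where "x = z m" "z i \<le> z m" "z m \<le> z u" using i u by (auto simp: Zg_def)
    thus "x \<in> z ` {i..u}" using theta by (auto simp: zg_le_iff)
  qed
  thus ?thesis by (rule finite_subset) simp
qed

lemma Ig_GG: assumes "t < T" shows "Ig t \<in> GG t"
  using Ig_props[of t] SUp_props[OF theta top[OF assms], of "K t"] by auto

lemma SS_props: assumes "t < T - 1" shows "SS t \<in> GG t \<and> Hh t (SS t) \<le> Hh t (Ig t)"
proof -
  have tT: "t < T" using assms by simp
  let ?H = "Hh t" let ?m = "Min (?H ` GG t)"
  have "?m \<in> ?H ` GG t" using GG_fin[OF tT] Ig_GG[OF tT] by (intro Min_in) auto
  then obtain x0 where x0: "x0 \<in> GG t" "?H x0 = ?m" by auto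
  let ?Q = "\<lambda>x. x \<in> GG t \<and> ?H x = ?m"
  have "?Q (Greatest ?Q)"
    using grid_greatest[OF theta, of ?Q x0 "SUp \<theta> (C t) (K t)"] x0 by blast
  hence q: "?Q (SS t)" using SS_eq[OF assms] by simp
  have "?m \<le> ?H (Ig t)" using GG_fin[OF tT] Ig_GG[OF tT] by (intro Min_le) auto
  thus ?thesis using q by simp
qed

lemma ss_props: assumes "t < T - 1"
  shows "ss t \<in> Zg \<theta> \<and> bI t \<le> ss t \<and> ss t \<le> SS t \<and> (K t = 0 \<longrightarrow> ss t = SS t)
     \<and> (K t \<noteq> 0 \<longrightarrow> (\<forall>y. y \<in> Zg \<theta> \<longrightarrow> bI t \<le> y \<longrightarrow> y < ss t \<longrightarrow> Hh t y > Hh t (SS t) + K t))"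
proof -
  have tT: "t < T" using assms by simp
  have S: "SS t \<in> GG t" using SS_props[OF assms] by blast
  have bS: "bI t \<le> SS t" using S bI_props[OF assms] by auto
  show ?thesis
  proof (cases "K t = 0")
    case True thus ?thesis using ss_eq[OF assms] S bS by auto
  next
    case False
    let ?Q = "\<lambda>x. x \<in> Zg \<theta> \<and> bI t \<le> x \<and> x \<le> SS t \<and> Hh t x \<le> Hh t (SS t) + K t"
    have QS: "?Q (SS t)" using S bS Kpos[OF tT] by auto
    have L: "?Q (Least ?Q) \<and> (\<forall>y. ?Q y \<longrightarrow> Least ?Q \<le> y)"
      using grid_least[OF theta, of ?Q, OF QS] by blast
    have e: "ss t = Least ?Q" using ss_eq[OF assms] False by simp
    have "\<forall>y. y \<in> Zg \<theta> \<longrightarrow> bI t \<le> y \<longrightarrow> y < ss t \<longrightarrow> Hh t y > Hh t (SS t) + K t"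
    proof (intro allI impI)
      fix y assume y: "y \<in> Zg \<theta>" "bI t \<le> y" "y < ss t"
      have "y \<le> SS t" using y L e by auto
      hence "\<not> Hh t y \<le> Hh t (SS t) + K t" using L e y by force
      thus "Hh t y > Hh t (SS t) + K t" by simp
    qed
    thus ?thesis using L e False by simp
  qed
qed

lemma bI_le_ss: assumes "t < T" shows "bI t \<le> ss t"
proof (cases "t < T - 1")
  case True thus ?thesis using ss_props[of t] by blast
next
  case False hence "t = T - 1" using assms by simp
  thus ?thesis using last_eqs by simp
qed

end

context inv begin

abbreviation "phi \<equiv> phibar \<theta> \<alpha> \<gamma> fd ss T"
abbreviation "psi t \<equiv> psistep \<theta> \<alpha> (\<gamma> t) (fd t) (ss (Suc t)) (phi (Suc t))"

lemma phi_last: "phi (T - 1) = (\<lambda>x y. if y < ss (T - 1) then 0 else \<gamma> (T - 1) * x)"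
  by (simp add: phibar_def)

lemma phi_step: assumes "t < T - 1" shows "phi t = phistep \<theta> (ss t) (psi t)"
proof -
  have "phi t = phiaux \<theta> \<alpha> \<gamma> fd ss T (Suc (T - 1 - Suc t))" unfolding phibar_def using idx[OF assms] by simp
  also have "\<dots> = phistep \<theta> (ss t) (psi t)"
    by (simp only: phiaux.simps Let_def idx[OF assms] phibar_def)
  finally show ?thesis .
qed

lemma phi_zero: assumes "t < T" "y < ss t" shows "phi t x y = 0"
proof (cases "t < T - 1")
  case True thus ?thesis using assms by (simp add: phi_step phistep_def)
next
  case False hence "t = T - 1" using assms by simp
  thus ?thesis using assms phi_last by simp
qed

lemma phi_grid: assumes "t < T - 1"
  shows "phi t \<theta> (z k) = (if z k < ss t then 0 else psi t \<theta> (z k))"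
proof (cases "z k < ss t")
  case True thus ?thesis using phi_zero assms by simp
next
  case False
  have sZ: "ss t \<in> Zg \<theta>" using ss_props[OF assms] by blast
  show ?thesis
  proof (cases "z k - \<theta> < ss t")
    case True
    have "z k = ss t"
    proof (rule ccontr)
      assume "z k \<noteq> ss t" hence "ss t < z k" using False by simp
      hence "ss t + \<theta> \<le> z k" using grid_sep[OF theta sZ in_Zg] by blast
      thus False using True by simp
    qed
    thus ?thesis using phi_step[OF assms] True False by (simp add: phistep_def)
  next
    case F2: False thus ?thesis using phi_step[OF assms] False by (simp add: phistep_def)
  qed
qed

lemma reidx: assumes "N \<ge> 0"
  shows "(\<Sum>n<nat (N + 1). g (int n - 1)) = (\<Sum>m\<in>{-1..N - 1}. g m)"
proof -
  have inj: "inj_on (\<lambda>n::nat. int n - 1) {..<nat (N + 1)}" by (auto simp: inj_on_def)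
  have img: "(\<lambda>n::nat. int n - 1) ` {..<nat (N + 1)} = {-1..N - 1}"
  proof
    show "(\<lambda>n::nat. int n - 1) ` {..<nat (N + 1)} \<subseteq> {-1..N - 1}" using assms by auto
    show "{-1..N - 1} \<subseteq> (\<lambda>n::nat. int n - 1) ` {..<nat (N + 1)}"
    proof
      fix m assume m: "m \<in> {-1..N - 1}"
      hence "m = int (nat (m + 1)) - 1" "nat (m + 1) < nat (N + 1)" by auto
      thus "m \<in> (\<lambda>n::nat. int n - 1) ` {..<nat (N + 1)}" by blast
    qed
  qed
  show ?thesis using sum.reindex[OF inj, of g] img by simp
qed

lemma sum_bound:
  assumes tT: "t < T - 1"
    and nn: "\<And>m. phi (Suc t) \<theta> (z m) \<ge> 0"
    and A: "\<And>n::nat. A n \<le> 2 * phi (Suc t) \<theta> (z k - z (int n - 1)) * fd t (int n - 1)"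
    and sA: "summable A"
  shows "\<alpha> * suminf A \<le> 2 * (psi t \<theta> (z k) - \<gamma> t * \<theta>)"
proof -
  have t1: "Suc t < T" using tT by simp
  have fpos: "\<And>n. fd t n \<ge> 0" using fdpos tT by simp
  define B where "B n = 2 * phi (Suc t) \<theta> (z k - z (int n - 1)) * fd t (int n - 1)" for n :: nat
  let ?s = "ss (Suc t)"
  define N where "N = \<lfloor>(z k - ?s) / \<theta>\<rfloor> + 1"
  have Bz: "B n = 0" if "z k - z (int n - 1) < ?s" for n
    using phi_zero[OF t1 that] B_def by simp
  show ?thesis
  proof (cases "z k < ?s - \<theta>")
    case True
    have "B n = 0" for n
    proof -
      have "z (int n - 1) \<ge> - \<theta>" using theta by (simp add: zg_def algebra_simps)
      thus ?thesis using True Bz by simp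
    qed
    hence B0: "B = (\<lambda>_. 0)" by auto
    have "A n \<le> 0" for n using A[of n] B_def[of n] B0 by (metis (no_types))
    hence "suminf A \<le> 0" using suminf_le[of A "\<lambda>_. 0"] sA by simp
    hence "\<alpha> * suminf A \<le> 0" using alpha by (simp add: mult_nonneg_nonpos)
    thus ?thesis using True by (simp add: psistep_def)
  next
    case False
    have "-1 \<le> (z k - ?s) / \<theta>" using False theta by (simp add: le_divide_eq)
    hence N0: "N \<ge> 0" unfolding N_def by linarith
    have supp: "B n = 0" if "n \<notin> {..<nat (N + 1)}" for n
    proof -
      have "int n - 1 \<ge> N" using that N0 by auto
      hence "real_of_int (int n - 1) \<ge> real_of_int N" by linarith
      moreover have "real_of_int N > (z k - ?s) / \<theta>" unfolding N_def by linarith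
      ultimately have "real_of_int (int n - 1) * \<theta> > z k - ?s"
        using theta by (smt (verit) pos_divide_less_eq mult_right_mono)
      hence "z k - z (int n - 1) < ?s" by (simp add: zg_def)
      thus ?thesis using Bz by simp
    qed
    have sB: "summable B" by (rule summable_finite[of "{..<nat (N + 1)}"]) (use supp in auto)
    have "suminf B = (\<Sum>n<nat (N + 1). B n)" by (rule suminf_finite) (use supp in auto)
    also have "\<dots> = (\<Sum>m\<in>{-1..N - 1}. 2 * phi (Suc t) \<theta> (z k - z m) * fd t m)"
      unfolding B_def using reidx[OF N0, of "\<lambda>m. 2 * phi (Suc t) \<theta> (z k - z m) * fd t m"] by simp
    also have "\<dots> = 2 * (\<Sum>m\<in>{-1..N - 1}. phi (Suc t) \<theta> (z k - z m) * fd t m)"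
      by (simp add: sum_distrib_left mult.assoc)
    finally have eqB: "suminf B = 2 * (\<Sum>m\<in>{-1..N - 1}. phi (Suc t) \<theta> (z k - z m) * fd t m)" .
    have "suminf A \<le> suminf B" using suminf_le[of A B] sA sB A B_def by simp
    hence "\<alpha> * suminf A \<le> \<alpha> * suminf B" using alpha by (simp add: mult_left_mono)
    moreover have "psi t \<theta> (z k) = \<gamma> t * \<theta> + \<alpha> * (\<Sum>m\<in>{-1..N - 1}. phi (Suc t) \<theta> (z k - z m) * fd t m)"
      using False unfolding psistep_def N_def by (simp add: Let_def)
    ultimately show ?thesis using eqB by simp
  qed
qed

end

context inv begin

definition "P t \<longleftrightarrow> (\<forall>k x x'. z (k - 1) < x \<longrightarrow> x \<le> z k \<longrightarrow> z (k - 2) \<le> x' \<longrightarrow> x' \<le> x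
      \<longrightarrow> V t x' - V t x \<le> 2 * phi t \<theta> (z k)) \<and> (\<forall>m. phi t \<theta> (z m) \<ge> 0)"

lemma shiftP:
  assumes "P t" "z (k - 2) \<le> a" "a \<le> x" "z (k - 1) < x" "x \<le> z k"
  shows "V t (a - z m) - V t (x - z m) \<le> 2 * phi t \<theta> (z k - z m)"
proof -
  have e1: "z (k - m - 1) = z (k - 1) - z m" "z (k - m - 2) = z (k - 2) - z m" "z (k - m) = z k - z m"
    by (simp_all add: zg_diff algebra_simps)
  show ?thesis using assms(1) unfolding P_def
    by (elim conjE allE[of _ "k - m"] allE[of _ "x - z m"] allE[of _ "a - z m"]) (use assms e1 in auto)
qed

lemma H_bound:
  assumes tT: "t < T - 1" and nn: "\<And>m. phi (Suc t) \<theta> (z m) \<ge> 0"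
    and hyp: "\<And>n::nat. V (Suc t) (a - z (int n - 1)) - V (Suc t) (x - z (int n - 1))
                 \<le> 2 * phi (Suc t) \<theta> (z k - z (int n - 1))"
  shows "Hh t a - Hh t x \<le> C t a - C t x + 2 * (psi t \<theta> (z k) - \<gamma> t * \<theta>)"
proof -
  have t2: "t + 2 \<le> T" using tT by simp
  let ?fa = "\<lambda>n. V (Suc t) (a - z (int n - 1)) * fd t (int n - 1)"
  let ?fx = "\<lambda>n. V (Suc t) (x - z (int n - 1)) * fd t (int n - 1)"
  define A where "A n = ?fa n - ?fx n" for n
  have sa: "summable ?fa" and sx: "summable ?fx" using summ[OF t2] by auto
  have sA: "summable A" unfolding A_def using summable_diff[OF sa sx] .
  have eq: "suminf ?fa - suminf ?fx = suminf A" unfolding A_def using suminf_diff[OF sa sx] by simp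
  have Ale: "A n \<le> 2 * phi (Suc t) \<theta> (z k - z (int n - 1)) * fd t (int n - 1)" for n
  proof -
    have "A n = (V (Suc t) (a - z (int n - 1)) - V (Suc t) (x - z (int n - 1))) * fd t (int n - 1)"
      unfolding A_def by (simp add: algebra_simps)
    also have "\<dots> \<le> 2 * phi (Suc t) \<theta> (z k - z (int n - 1)) * fd t (int n - 1)"
      by (rule mult_right_mono[OF hyp]) (use fdpos t2 in auto)
    finally show ?thesis .
  qed
  have "\<alpha> * suminf A \<le> 2 * (psi t \<theta> (z k) - \<gamma> t * \<theta>)"
    by (rule sum_bound[OF tT nn Ale sA])
  moreover have "Hh t a - Hh t x = C t a - C t x + \<alpha> * (suminf ?fa - suminf ?fx)"
    using Hh_eq[OF tT] by (simp add: algebra_simps)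
  ultimately show ?thesis using eq by simp
qed

lemma P_last: "P (T - 1)"
proof -
  let ?t = "T - 1" let ?s = "ss ?t"
  have tT: "?t < T" using T2 by simp
  have cont: "continuous_on UNIV (C ?t)" using lip_cont[OF lip[OF tT] gam[OF tT]] .
  have sl: "C ?t ?s = C ?t (Cmin (C ?t)) + K ?t"
    using sLast_props[OF Kpos[OF tT] bot[OF tT] cont] last_eqs by simp
  have Vl: "V ?t y = (if y < ?s then C ?t ?s else C ?t y)" for y
    using V_eq[of ?t y] last_eqs sl by simp
  have L: "C ?t u - C ?t v \<le> \<gamma> ?t * \<bar>u - v\<bar>" for u v using lip[OF tT, of u v] by simp
  have g: "\<gamma> ?t \<ge> 0" using gam[OF tT] .
  have pl: "phi ?t u y = (if y < ?s then 0 else \<gamma> ?t * u)" for u y by (simp only: phi_last)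
  have nn: "\<forall>m. phi ?t \<theta> (z m) \<ge> 0" unfolding pl using g theta by simp
  have main: "V ?t x' - V ?t x \<le> 2 * phi ?t \<theta> (z k)"
    if h: "z (k - 1) < x" "x \<le> z k" "z (k - 2) \<le> x'" "x' \<le> x" for k x x'
  proof -
    have d: "z k - z (k - 2) = 2 * \<theta>" by (simp add: zg_def algebra_simps)
    show ?thesis
    proof (cases "x < ?s")
      case True thus ?thesis using Vl h nn by auto
    next
      case False
      hence ph: "phi ?t \<theta> (z k) = \<gamma> ?t * \<theta>" unfolding pl using h by simp
      show ?thesis
      proof (cases "x' < ?s")
        case True
        have "C ?t ?s - C ?t x \<le> \<gamma> ?t * \<bar>?s - x\<bar>" using L by blast
        also have "\<dots> \<le> \<gamma> ?t * (2 * \<theta>)" using False True h d g by (intro mult_left_mono) auto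
        finally show ?thesis using Vl True False ph by simp
      next
        case F2: False
        have "C ?t x' - C ?t x \<le> \<gamma> ?t * \<bar>x' - x\<bar>" using L by blast
        also have "\<dots> \<le> \<gamma> ?t * (2 * \<theta>)" using h d g by (intro mult_left_mono) auto
        finally show ?thesis using Vl F2 False ph by simp
      qed
    qed
  qed
  show ?thesis unfolding P_def using main nn by blast
qed

end

context inv begin

lemma P_step: assumes tT: "t < T - 1" and IH: "P (Suc t)" shows "P t"
proof -
  have tT': "t < T" using tT by simp
  have t1: "Suc t < T" using tT by simp
  have nn1: "\<And>m. phi (Suc t) \<theta> (z m) \<ge> 0" using IH unfolding P_def by blast
  have f: "\<And>n. fd t n \<ge> 0" using fdpos tT by simp
  have g: "\<gamma> t \<ge> 0" using gam[OF tT'] .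
  let ?s = "ss t" let ?S = "SS t" let ?H = "Hh t"
  have psinn: "psi t \<theta> (z m) \<ge> \<gamma> t * \<theta>" for m
  proof (cases "z m < ss (Suc t) - \<theta>")
    case True thus ?thesis by (simp add: psistep_def)
  next
    case False
    have "(\<Sum>j\<in>{-1..\<lfloor>(z m - ss (Suc t)) / \<theta>\<rfloor> + 1 - 1}. phi (Suc t) \<theta> (z m - z j) * fd t j) \<ge> 0"
      using nn1 f by (intro sum_nonneg mult_nonneg_nonneg) (simp_all add: zg_diff)
    thus ?thesis using False alpha by (simp add: psistep_def Let_def)
  qed
  have nn: "\<forall>m. phi t \<theta> (z m) \<ge> 0"
  proof
    fix m
    have "\<gamma> t * \<theta> \<ge> 0" using g theta by simp
    thus "phi t \<theta> (z m) \<ge> 0" using psinn[of m] phi_grid[OF tT, of m] by (simp split: if_splits)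
  qed
  have Hb: "?H a - ?H x \<le> 2 * psi t \<theta> (z k)"
    if h: "z (k - 1) < x" "x \<le> z k" "z (k - 2) \<le> a" "a \<le> x" for k x a
  proof -
    have "?H a - ?H x \<le> C t a - C t x + 2 * (psi t \<theta> (z k) - \<gamma> t * \<theta>)"
      by (rule H_bound[OF tT nn1]) (rule shiftP[OF IH h(3,4,1,2)])
    moreover have "C t a - C t x \<le> \<gamma> t * (2 * \<theta>)"
    proof -
      have d: "z k - z (k - 2) = 2 * \<theta>" by (simp add: zg_def algebra_simps)
      have "C t a - C t x \<le> \<gamma> t * \<bar>a - x\<bar>" using lip[OF tT', of a x] by simp
      also have "\<dots> \<le> \<gamma> t * (2 * \<theta>)" using h d g by (intro mult_left_mono) auto
      finally show ?thesis .
    qed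
    ultimately show ?thesis by simp
  qed
  have sp: "?s \<in> Zg \<theta>" "bI t \<le> ?s" "?s \<le> ?S" "K t = 0 \<longrightarrow> ?s = ?S"
     "K t \<noteq> 0 \<longrightarrow> (\<forall>y. y \<in> Zg \<theta> \<longrightarrow> bI t \<le> y \<longrightarrow> y < ?s \<longrightarrow> ?H y > ?H ?S + K t)"
    using ss_props[OF tT] by blast+
  have main: "V t x' - V t x \<le> 2 * phi t \<theta> (z k)"
    if h: "z (k - 1) < x" "x \<le> z k" "z (k - 2) \<le> x'" "x' \<le> x" for k x x'
  proof (cases "x < ?s")
    case True thus ?thesis using V_eq[of t] h nn by auto
  next
    case False
    hence ph: "phi t \<theta> (z k) = psi t \<theta> (z k)" using h phi_grid[OF tT] by simp
    show ?thesis
    proof (cases "x' < ?s")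
      case F2: False
      thus ?thesis using V_eq[of t] False ph Hb[OF h] by simp
    next
      case True
      have Vd: "V t x' - V t x = ?H ?S + K t - ?H x" using V_eq[of t] True False by simp
      \<comment> \<open>s is z(k-1) or z k\<close>
      obtain j where j: "?s = z j" using sp(1) by (auto simp: Zg_def)
      have "k - 2 < j" using h(3) True j theta by (simp add: zg_less_iff[symmetric])
      hence jk: "z (k - 1) \<le> ?s" using j theta by (simp add: zg_le_iff)
      have zks: "z k \<le> ?s + \<theta>" using jk by (simp add: zg_def algebra_simps)
      have zk2: "z (k - 2) = z (k - 1) - \<theta>" by (simp add: zg_def algebra_simps)
      have zk1: "z (k - 1) = z k - \<theta>" by (simp add: zg_def algebra_simps)
      show ?thesis
      proof (cases "K t = 0")
        case True
        hence "?s = ?S" using sp by blast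
        hence sS: "?s = ?S" .
        have "z (k - 2) \<le> ?S" using jk zk2 theta sS by linarith
        moreover have "?S \<le> x" using False sS by simp
        ultimately have "?H ?S - ?H x \<le> 2 * psi t \<theta> (z k)" by (rule Hb[OF h(1,2)])
        thus ?thesis using Vd True ph by linarith
      next
        case Kn: False
        show ?thesis
        proof (cases "bI t \<le> ?s - \<theta>")
          case True
          have gz: "?s - \<theta> \<in> Zg \<theta>" 
          proof -
            have "?s - \<theta> = z (j - 1)" using j by (simp add: zg_def algebra_simps)
            thus ?thesis using in_Zg by metis
          qed
          have "?H (?s - \<theta>) > ?H ?S + K t" using sp(5) Kn gz True theta by simp
          moreover have "?H (?s - \<theta>) - ?H x \<le> 2 * psi t \<theta> (z k)"
          proof (rule Hb[OF h(1,2)])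
            show "z (k - 2) \<le> ?s - \<theta>" using jk zk2 by linarith
            show "?s - \<theta> \<le> x" using False theta by linarith
          qed
          ultimately show ?thesis using Vd ph by linarith
        next
          case False2: False
          have sb: "?s = bI t"
          proof (rule ccontr)
            assume "?s \<noteq> bI t" hence "bI t < ?s" using sp by simp
            hence "bI t + \<theta> \<le> ?s" using grid_sep[OF theta _ sp(1)] bI_props[OF tT] by blast
            thus False using False2 by simp
          qed
          have bp: "bI t \<le> Ig t" "C t (bI t - \<theta>) > C t (Ig t) + K t" using bI_props[OF tT] by blast+
          have HS: "?H ?S \<le> ?H (Ig t)" using SS_props[OF tT] by blast
          have ip: "Ig t + \<theta> < bI (Suc t)" using Ig_props by blast
          have bs1: "bI (Suc t) \<le> ss (Suc t)" using bI_le_ss[OF t1] .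
          have hyp: "V (Suc t) (Ig t - z (int n - 1)) - V (Suc t) (x - z (int n - 1))
                      \<le> 2 * phi (Suc t) \<theta> (z k - z (int n - 1))" for n :: nat
          proof -
            let ?m = "int n - 1"
            have zm: "z ?m \<ge> - \<theta>" using theta by (simp add: zg_def algebra_simps)
            have w1: "Ig t - z ?m < ss (Suc t)" using zm ip bs1 by simp
            have w2: "z (k - 2) - z ?m < ss (Suc t)" using zm ip bs1 zks zk2 sb bp h
              using zk1 by linarith
            have eqV: "V (Suc t) (Ig t - z ?m) = V (Suc t) (z (k - 2) - z ?m)"
              using V_eq[of "Suc t"] w1 w2 by simp
            have "z (k - 2) \<le> x" using h zk2 theta by simp
            thus ?thesis using eqV shiftP[OF IH _ _ h(1,2), of "z (k - 2)" ?m] by simp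
          qed
          have HI: "?H (Ig t) - ?H x \<le> C t (Ig t) - C t x + 2 * (psi t \<theta> (z k) - \<gamma> t * \<theta>)"
            by (rule H_bound[OF tT nn1 hyp])
          have CL: "C t (bI t - \<theta>) - C t x \<le> \<gamma> t * (2 * \<theta>)"
          proof -
            have "C t (bI t - \<theta>) - C t x \<le> \<gamma> t * \<bar>bI t - \<theta> - x\<bar>" using lip[OF tT', of "bI t - \<theta>" x] by linarith
            also have "\<dots> \<le> \<gamma> t * (2 * \<theta>)" using g False zks h sb theta by (intro mult_left_mono) auto
            finally show ?thesis .
          qed
          have A1: "\<gamma> t * (2 * \<theta>) = 2 * (\<gamma> t * \<theta>)" by simp
          have s1: "?H ?S + K t - ?H x \<le> ?H (Ig t) + K t - ?H x" using HS by linarith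
          have s2: "?H (Ig t) + K t - ?H x \<le> C t (Ig t) + K t - C t x + 2 * (psi t \<theta> (z k) - \<gamma> t * \<theta>)" using HI by linarith
          have s3: "C t (Ig t) + K t - C t x \<le> C t (bI t - \<theta>) - C t x" using bp(2) by linarith
          have s4: "C t (bI t - \<theta>) - C t x \<le> 2 * (\<gamma> t * \<theta>)" using A1 CL by linarith
          have "?H ?S + K t - ?H x \<le> 2 * psi t \<theta> (z k)" using s1 s2 s3 s4 by (smt (verit))
          thus ?thesis using Vd ph by linarith
        qed
      qed
    qed
  qed
  show ?thesis unfolding P_def using main nn by blast
qed

lemma P_all: assumes "t < T" shows "P t"
proof -
  have "t \<le> T - 1" using assms by simp
  thus ?thesis
  proof (induction t rule: inc_induct)
    case base thus ?case by (rule P_last)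
  next
    case (step n) thus ?case using P_step by simp
  qed
qed

end


theorem lemma4p10:
  fixes T :: nat and \<alpha> \<theta> :: real
    and c K \<gamma> :: "nat \<Rightarrow> real" and G :: "nat \<Rightarrow> real \<Rightarrow> real"
    and M :: "nat \<Rightarrow> real measure"
    and t :: nat and x x' :: real and k :: int
  defines "C \<equiv> Cfun \<alpha> c G M"
  defines "fd \<equiv> (\<lambda>t. fg \<theta> (M t))"
  assumes T2: "T \<ge> 2"
    and alpha: "0 < \<alpha>" "\<alpha> \<le> 1"
    and theta: "\<theta> > 0"
    and Kpos: "\<forall>t<T. K t \<ge> 0"
    and Kdec: "\<forall>t. t + 2 \<le> T \<longrightarrow> K t \<ge> \<alpha> * K (Suc t)"
    and demand: "\<forall>t<T. prob_space (M t) \<and> sets (M t) = sets borel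
                   \<and> (AE d in M t. 0 \<le> d) \<and> integrable (M t) (\<lambda>d. d)"
    and convex: "\<forall>t<T. convex_on UNIV (C t)
                   \<and> filterlim (C t) at_top at_top \<and> filterlim (C t) at_top at_bot"
    and finite_exp: "\<forall>t. t + 2 \<le> T \<longrightarrow> (\<forall>y. summable
                   (\<lambda>n. Vf \<theta> \<alpha> C K fd T (Suc t) (y - zg \<theta> (int n - 1)) * fd t (int n - 1)))"
    and lipschitz: "\<forall>t<T. \<gamma> t \<ge> 0 \<and> (\<forall>u v. \<bar>C t u - C t v\<bar> \<le> \<gamma> t * \<bar>u - v\<bar>)"
    and xx': "0 \<le> x - x'" "x - x' \<le> \<theta>"
    and xk: "zg \<theta> (k - 1) < x" "x \<le> zg \<theta> k"
    and t: "t < T"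
  shows "Vf \<theta> \<alpha> C K fd T t x' - Vf \<theta> \<alpha> C K fd T t x
           \<le> 2 * phibar \<theta> \<alpha> \<gamma> fd (sf \<theta> \<alpha> C K fd T) T t \<theta> (zg \<theta> k)"
proof -
  have fdpos: "fd t' n \<ge> 0" if "t' + 2 \<le> T" for t' n
  proof -
    have tt: "t' < T" using that by simp
    interpret prob_space "M t'" using demand tt by blast
    have sb: "sets (M t') = sets borel" using demand tt by blast
    have "measure (M t') {..zg \<theta> n} \<le> measure (M t') {..zg \<theta> (n + 1)}"
      by (rule finite_measure_mono) (use theta sb in \<open>auto simp: zg_def\<close>)
    thus ?thesis unfolding fd_def fg_def cdf_def by simp
  qed
  interpret I: inv \<theta> \<alpha> T C K \<gamma> fd
  proof
    show "\<theta> > 0" using theta .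
    show "\<alpha> \<ge> 0" using alpha by simp
    show "T \<ge> 2" using T2 .
  qed (use Kpos lipschitz convex fdpos finite_exp in auto)
  have P: "I.P t" using I.P_all[OF t] .
  have "zg \<theta> (k - 2) = zg \<theta> (k - 1) - \<theta>" by (simp add: zg_def algebra_simps)
  hence "zg \<theta> (k - 2) \<le> x'" using xk xx' by linarith
  moreover have "x' \<le> x" using xx' by simp
  ultimately show ?thesis using P xk unfolding I.P_def by blast
qed


end
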